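(* Let $K$ be a symmetric kernel function (i.e. $K(s)=K(-s)$, $\int K=1$) supported on $[-1,1]$, and let $\mathcal{K}$ be an antiderivative of $K$. Then $$\int\!\!\int\!\!\int\mathbb{1}\{s_1<s_2<s_3\}\mathrm{sgn}(s_3-2s_2+s_1)K(s_1)K(s_2)K(s_3)\,ds_1ds_2ds_3=0;$$ $$b_K:=\int\!\!\int\!\!\int\Big\{(\mathbb{1}\{s_1<s_2<s_3\}+\mathbb{1}\{s_3<s_2<s_1\})\mathrm{sgn}(s_3-2s_2+s_1)+(\mathbb{1}\{s_1<s_3<s_2\}+\mathbb{1}\{s_2<s_3<s_1\})\mathrm{sgn}(s_2-2s_3+s_1)$$ $$+(\mathbb{1}\{s_2<s_1<s_3\}+\mathbb{1}\{s_3<s_1<s_2\})\mathrm{sgn}(s_3-2s_1+s_2)\Big\}s_1K(s_1)K(s_2)K(s_3)\,ds_1ds_2ds_3$$ $$=-2\int\!\!\int K(s_1)K(s_2)\big[\mathcal{K}(2s_1-s_2)+2\mathcal{K}(2s_2-s_1)\big]s_1\,ds_1ds_2;$$ and for any $k,l\in\{1,2,3\}$, $$\int\!\!\int\!\!\int(\mathbb{1}\{s_1<s_2<s_3\}+\mathbb{1}\{s_3<s_2<s_1\})\mathrm{sgn}(s_3-2s_2+s_1)s_ks_lK(s_1)K(s_2)K(s_3)\,ds_1ds_2ds_3=0.$$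
   Context: $\mathbb{1}\{\cdot\}$ denotes the indicator function and $\mathrm{sgn}$ the sign function; all integrals are over $\mathbb{R}$ (equivalently $[-1,1]$). *)

theory Defs
  imports "HOL-Analysis.Analysis"
begin

end

theory Submission
  imports Defs
begin

locale kern =
  fixes K :: "real \<Rightarrow> real"
  assumes K_int: "integrable lborel K"
begin

lemma K_meas[measurable]: "K \<in> borel_measurable borel"
  using borel_measurable_integrable[OF K_int] by simp

definition "dom1 f \<longleftrightarrow> f \<in> borel_measurable borel \<and> (\<exists>C. \<forall>x. \<bar>f x\<bar> \<le> C * \<bar>K x\<bar>)"
definition "dom2 g \<longleftrightarrow> (\<lambda>(x,y). g x y) \<in> borel_measurable (lborel \<Otimes>\<^sub>M lborel)
   \<and> (\<exists>C. \<forall>x y. \<bar>g x y\<bar> \<le> C * \<bar>K x\<bar> * \<bar>K y\<bar>)"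
definition "dom3 h \<longleftrightarrow> (\<lambda>(x,y,z). h x y z) \<in> borel_measurable (lborel \<Otimes>\<^sub>M (lborel \<Otimes>\<^sub>M lborel))
   \<and> (\<exists>C. \<forall>x y z. \<bar>h x y z\<bar> \<le> C * \<bar>K x\<bar> * \<bar>K y\<bar> * \<bar>K z\<bar>)"

lemma dom1_int: "dom1 f \<Longrightarrow> integrable lborel f"
  unfolding dom1_def
proof (elim conjE exE)
  fix C assume m: "f \<in> borel_measurable borel" and b: "\<forall>x. \<bar>f x\<bar> \<le> C * \<bar>K x\<bar>"
  show "integrable lborel f"
    by (rule Bochner_Integration.integrable_bound[of _ "\<lambda>x. C * \<bar>K x\<bar>"])
       (use K_int m b in \<open>auto intro!: AE_I2 order_trans[OF _ abs_ge_self]\<close>)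
qed

lemma prod_int: "integrable (lborel \<Otimes>\<^sub>M lborel) (\<lambda>(x,y). \<bar>K x\<bar> * \<bar>K y\<bar>)"
proof (rule lborel_pair.Fubini_integrable)
  show "(\<lambda>(x,y). \<bar>K x\<bar> * \<bar>K y\<bar>) \<in> borel_measurable (lborel \<Otimes>\<^sub>M lborel)" by measurable
  have "(\<lambda>x. \<integral>y. norm (\<bar>K x\<bar> * \<bar>K y\<bar>) \<partial>lborel) = (\<lambda>x. \<bar>K x\<bar> * (\<integral>y. \<bar>K y\<bar> \<partial>lborel))"
    by (simp add: abs_mult)
  then show "integrable lborel (\<lambda>x. \<integral>y. norm (case (x, y) of (x, y) \<Rightarrow> \<bar>K x\<bar> * \<bar>K y\<bar>) \<partial>lborel)"
    using K_int by simp
  show "AE x in lborel. integrable lborel (\<lambda>y. case (x, y) of (x, y) \<Rightarrow> \<bar>K x\<bar> * \<bar>K y\<bar>)"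
    using K_int by simp
qed

lemma dom2_int: "dom2 g \<Longrightarrow> integrable (lborel \<Otimes>\<^sub>M lborel) (\<lambda>(x,y). g x y)"
  unfolding dom2_def
proof (elim conjE exE)
  fix C assume m: "(\<lambda>(x,y). g x y) \<in> borel_measurable (lborel \<Otimes>\<^sub>M lborel)" and b: "\<forall>x y. \<bar>g x y\<bar> \<le> C * \<bar>K x\<bar> * \<bar>K y\<bar>"
  show ?thesis
  proof (rule Bochner_Integration.integrable_bound[of _ "\<lambda>p. C * (case p of (x,y) \<Rightarrow> \<bar>K x\<bar> * \<bar>K y\<bar>)"])
    show "integrable (lborel \<Otimes>\<^sub>M lborel) (\<lambda>p. C * (case p of (x,y) \<Rightarrow> \<bar>K x\<bar> * \<bar>K y\<bar>))"
      by (rule integrable_mult_right) (rule prod_int)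
  qed (use m b in \<open>auto intro!: AE_I2 order_trans[OF _ abs_ge_self] simp: mult.assoc split: prod.splits\<close>)
qed

lemma dom2_swap: "dom2 g \<Longrightarrow> (LBINT y. LBINT x. g x y) = (LBINT x. LBINT y. g x y)"
  by (rule lborel_pair.Fubini_integral) (erule dom2_int)

lemma dom3_fix: assumes "dom3 h" shows "dom2 (\<lambda>x y. h x y z)"
proof -
  from assms obtain C where m: "(\<lambda>(x,y,z). h x y z) \<in> borel_measurable (lborel \<Otimes>\<^sub>M (lborel \<Otimes>\<^sub>M lborel))"
    and b: "\<forall>x y z. \<bar>h x y z\<bar> \<le> C * \<bar>K x\<bar> * \<bar>K y\<bar> * \<bar>K z\<bar>" unfolding dom3_def by blast
  have "(\<lambda>p. (\<lambda>(x,y,z). h x y z) ((\<lambda>(x,y). (x,(y,z))) p)) \<in> borel_measurable (lborel \<Otimes>\<^sub>M lborel)"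
    by (rule measurable_compose[OF _ m]) measurable
  moreover have "\<forall>x y. \<bar>h x y z\<bar> \<le> (C * \<bar>K z\<bar>) * \<bar>K x\<bar> * \<bar>K y\<bar>"
    using b by (simp add: ac_simps)
  ultimately show ?thesis unfolding dom2_def by (auto simp: case_prod_beta')
qed

lemma dom3_inner: assumes "dom3 h" shows "dom2 (\<lambda>y z. LBINT x. h x y z)"
proof -
  from assms obtain C where m: "(\<lambda>(x,y,z). h x y z) \<in> borel_measurable (lborel \<Otimes>\<^sub>M (lborel \<Otimes>\<^sub>M lborel))"
    and b: "\<forall>x y z. \<bar>h x y z\<bar> \<le> C * \<bar>K x\<bar> * \<bar>K y\<bar> * \<bar>K z\<bar>" unfolding dom3_def by blast
  have m2: "(\<lambda>q. (\<lambda>(x,y,z). h x y z) ((\<lambda>(p,x). (x,p)) q)) \<in> borel_measurable ((lborel \<Otimes>\<^sub>M lborel) \<Otimes>\<^sub>M lborel)"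
    by (rule measurable_compose[OF _ m]) measurable
  have "(\<lambda>p. LBINT x. h x (fst p) (snd p)) \<in> borel_measurable (lborel \<Otimes>\<^sub>M lborel)"
    by (rule lborel.borel_measurable_lebesgue_integral) (use m2 in \<open>simp add: case_prod_beta'\<close>)
  hence M: "(\<lambda>(y,z). LBINT x. h x y z) \<in> borel_measurable (lborel \<Otimes>\<^sub>M lborel)"
    by (simp add: case_prod_beta')
  have B: "\<bar>LBINT x. h x y z\<bar> \<le> (C * (LBINT x. \<bar>K x\<bar>)) * \<bar>K y\<bar> * \<bar>K z\<bar>" for y z
  proof -
    have "dom1 (\<lambda>x. h x y z)" unfolding dom1_def
    proof
      show "(\<lambda>x. h x y z) \<in> borel_measurable borel"
        using measurable_compose[OF _ m, of "\<lambda>x. (x,y,z)" borel] by (simp add: measurable_Pair)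
      show "\<exists>C'. \<forall>x. \<bar>h x y z\<bar> \<le> C' * \<bar>K x\<bar>"
        by (rule exI[of _ "C * \<bar>K y\<bar> * \<bar>K z\<bar>"]) (use b in \<open>simp add: ac_simps\<close>)
    qed
    hence i: "integrable lborel (\<lambda>x. h x y z)" by (rule dom1_int)
    have "\<bar>LBINT x. h x y z\<bar> \<le> (LBINT x. \<bar>h x y z\<bar>)"
      using integral_norm_bound[of lborel "\<lambda>x. h x y z"] by simp
    also have "\<dots> \<le> (LBINT x. (C * \<bar>K y\<bar> * \<bar>K z\<bar>) * \<bar>K x\<bar>)"
      by (rule integral_mono) (use i K_int b in \<open>auto simp: ac_simps\<close>)
    also have "\<dots> = (C * (LBINT x. \<bar>K x\<bar>)) * \<bar>K y\<bar> * \<bar>K z\<bar>"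
      by (simp add: ac_simps)
    finally show ?thesis .
  qed
  show ?thesis unfolding dom2_def using M B by blast
qed

lemma dom3_swap12: assumes "dom3 h" shows "dom3 (\<lambda>x y z. h y x z)"
proof -
  from assms obtain C where m: "(\<lambda>(x,y,z). h x y z) \<in> borel_measurable (lborel \<Otimes>\<^sub>M (lborel \<Otimes>\<^sub>M lborel))"
    and b: "\<forall>x y z. \<bar>h x y z\<bar> \<le> C * \<bar>K x\<bar> * \<bar>K y\<bar> * \<bar>K z\<bar>" unfolding dom3_def by blast
  have "(\<lambda>q. (\<lambda>(x,y,z). h x y z) ((\<lambda>(x,y,z). (y,x,z)) q)) \<in> borel_measurable (lborel \<Otimes>\<^sub>M (lborel \<Otimes>\<^sub>M lborel))"
    by (rule measurable_compose[OF _ m]) measurable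
  moreover have "\<forall>x y z. \<bar>h y x z\<bar> \<le> C * \<bar>K x\<bar> * \<bar>K y\<bar> * \<bar>K z\<bar>"
    using b by (metis mult.commute mult.left_commute)
  ultimately show ?thesis unfolding dom3_def by (auto simp: case_prod_beta')
qed

lemma dom3_swap23: assumes "dom3 h" shows "dom3 (\<lambda>x y z. h x z y)"
proof -
  from assms obtain C where m: "(\<lambda>(x,y,z). h x y z) \<in> borel_measurable (lborel \<Otimes>\<^sub>M (lborel \<Otimes>\<^sub>M lborel))"
    and b: "\<forall>x y z. \<bar>h x y z\<bar> \<le> C * \<bar>K x\<bar> * \<bar>K y\<bar> * \<bar>K z\<bar>" unfolding dom3_def by blast
  have "(\<lambda>q. (\<lambda>(x,y,z). h x y z) ((\<lambda>(x,y,z). (x,z,y)) q)) \<in> borel_measurable (lborel \<Otimes>\<^sub>M (lborel \<Otimes>\<^sub>M lborel))"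
    by (rule measurable_compose[OF _ m]) measurable
  moreover have "\<forall>x y z. \<bar>h x z y\<bar> \<le> C * \<bar>K x\<bar> * \<bar>K y\<bar> * \<bar>K z\<bar>"
    using b by (metis mult.commute mult.left_commute mult.assoc)
  ultimately show ?thesis unfolding dom3_def by (auto simp: case_prod_beta')
qed

lemma I3_swap12: assumes "dom3 h"
  shows "(LBINT z. LBINT y. LBINT x. h x y z) = (LBINT z. LBINT y. LBINT x. h y x z)"
  by (rule Bochner_Integration.integral_cong[OF refl]) (rule dom2_swap[OF dom3_fix[OF assms]])

lemma I3_swap23: assumes "dom3 h"
  shows "(LBINT z. LBINT y. LBINT x. h x y z) = (LBINT z. LBINT y. LBINT x. h x z y)"
  by (rule dom2_swap[OF dom3_inner[OF assms]])

lemma I3_swap13: assumes "dom3 h"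
  shows "(LBINT z. LBINT y. LBINT x. h x y z) = (LBINT z. LBINT y. LBINT x. h z y x)"
  using I3_swap12[OF assms] I3_swap23[OF dom3_swap12[OF assms]]
    I3_swap12[OF dom3_swap23[OF dom3_swap12[OF assms]]] by simp

lemma I3_rot: assumes "dom3 h"
  shows "(LBINT z. LBINT y. LBINT x. h x y z) = (LBINT y. LBINT x. LBINT z. h x y z)"
  using I3_swap23[OF assms] I3_swap12[OF dom3_swap23[OF assms]] by simp

lemma dom2_fix: assumes "dom2 g" shows "integrable lborel (\<lambda>x. g x y)"
proof -
  from assms obtain C where m: "(\<lambda>(x,y). g x y) \<in> borel_measurable (lborel \<Otimes>\<^sub>M lborel)"
    and b: "\<forall>x y. \<bar>g x y\<bar> \<le> C * \<bar>K x\<bar> * \<bar>K y\<bar>" unfolding dom2_def by blast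
  show ?thesis
  proof (rule dom1_int, unfold dom1_def, intro conjI)
    show "(\<lambda>x. g x y) \<in> borel_measurable borel"
      using measurable_compose[OF _ m, of "\<lambda>x. (x,y)" borel] by (simp add: measurable_Pair)
    show "\<exists>C'. \<forall>x. \<bar>g x y\<bar> \<le> C' * \<bar>K x\<bar>"
      by (rule exI[of _ "C * \<bar>K y\<bar>"]) (use b in \<open>simp add: ac_simps\<close>)
  qed
qed

lemma dom2_outer: assumes "dom2 g" shows "dom1 (\<lambda>y. LBINT x. g x y)"
proof -
  from assms obtain C where m: "(\<lambda>(x,y). g x y) \<in> borel_measurable (lborel \<Otimes>\<^sub>M lborel)"
    and b: "\<forall>x y. \<bar>g x y\<bar> \<le> C * \<bar>K x\<bar> * \<bar>K y\<bar>" unfolding dom2_def by blast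
  have m2: "(\<lambda>q. (\<lambda>(x,y). g x y) ((\<lambda>(y,x). (x,y)) q)) \<in> borel_measurable (lborel \<Otimes>\<^sub>M lborel)"
    by (rule measurable_compose[OF _ m]) measurable
  have "(\<lambda>y. LBINT x. g x y) \<in> borel_measurable lborel"
    by (rule lborel.borel_measurable_lebesgue_integral) (use m2 in \<open>simp add: case_prod_beta'\<close>)
  hence M: "(\<lambda>y. LBINT x. g x y) \<in> borel_measurable borel" by simp
  have B: "\<bar>LBINT x. g x y\<bar> \<le> (C * (LBINT x. \<bar>K x\<bar>)) * \<bar>K y\<bar>" for y
  proof -
    have i: "integrable lborel (\<lambda>x. g x y)" by (rule dom2_fix[OF assms])
    have "\<bar>LBINT x. g x y\<bar> \<le> (LBINT x. \<bar>g x y\<bar>)"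
      using integral_norm_bound[of lborel "\<lambda>x. g x y"] by simp
    also have "\<dots> \<le> (LBINT x. (C * \<bar>K y\<bar>) * \<bar>K x\<bar>)"
      by (rule integral_mono) (use i K_int b in \<open>auto simp: ac_simps\<close>)
    also have "\<dots> = (C * (LBINT x. \<bar>K x\<bar>)) * \<bar>K y\<bar>"
      by (simp add: ac_simps)
    finally show ?thesis .
  qed
  show ?thesis unfolding dom1_def using M B by blast
qed

lemma I2_add: assumes "dom2 g1" "dom2 g2"
  shows "(LBINT y. LBINT x. g1 x y + g2 x y) = (LBINT y. LBINT x. g1 x y) + (LBINT y. LBINT x. g2 x y)"
proof -
  have "(LBINT y. LBINT x. g1 x y + g2 x y) = (LBINT y. (LBINT x. g1 x y) + (LBINT x. g2 x y))"
    by (rule Bochner_Integration.integral_cong[OF refl], rule Bochner_Integration.integral_add) (use dom2_fix assms in auto)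
  also have "\<dots> = (LBINT y. LBINT x. g1 x y) + (LBINT y. LBINT x. g2 x y)"
    by (rule Bochner_Integration.integral_add) (use dom1_int dom2_outer assms in auto)
  finally show ?thesis .
qed

lemma I3_add: assumes "dom3 h1" "dom3 h2"
  shows "(LBINT z. LBINT y. LBINT x. h1 x y z + h2 x y z) = (LBINT z. LBINT y. LBINT x. h1 x y z) + (LBINT z. LBINT y. LBINT x. h2 x y z)"
proof -
  have "(LBINT z. LBINT y. LBINT x. h1 x y z + h2 x y z) = (LBINT z. (LBINT y. LBINT x. h1 x y z) + (LBINT y. LBINT x. h2 x y z))"
    by (rule Bochner_Integration.integral_cong[OF refl], rule I2_add) (use dom3_fix assms in auto)
  also have "\<dots> = (LBINT z. LBINT y. LBINT x. h1 x y z) + (LBINT z. LBINT y. LBINT x. h2 x y z)"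
    by (rule Bochner_Integration.integral_add) (use dom1_int dom2_outer dom3_inner assms in auto)
  finally show ?thesis .
qed

lemma dom3_add: assumes "dom3 h1" "dom3 h2" shows "dom3 (\<lambda>x y z. h1 x y z + h2 x y z)"
proof -
  from assms(1) obtain C1 where m1: "(\<lambda>(x,y,z). h1 x y z) \<in> borel_measurable (lborel \<Otimes>\<^sub>M (lborel \<Otimes>\<^sub>M lborel))"
    and b1: "\<forall>x y z. \<bar>h1 x y z\<bar> \<le> C1 * \<bar>K x\<bar> * \<bar>K y\<bar> * \<bar>K z\<bar>" unfolding dom3_def by blast
  from assms(2) obtain C2 where m2: "(\<lambda>(x,y,z). h2 x y z) \<in> borel_measurable (lborel \<Otimes>\<^sub>M (lborel \<Otimes>\<^sub>M lborel))"
    and b2: "\<forall>x y z. \<bar>h2 x y z\<bar> \<le> C2 * \<bar>K x\<bar> * \<bar>K y\<bar> * \<bar>K z\<bar>" unfolding dom3_def by blast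
  have "(\<lambda>p. (\<lambda>(x,y,z). h1 x y z) p + (\<lambda>(x,y,z). h2 x y z) p) \<in> borel_measurable (lborel \<Otimes>\<^sub>M (lborel \<Otimes>\<^sub>M lborel))"
    using m1 m2 by measurable
  moreover have "\<forall>x y z. \<bar>h1 x y z + h2 x y z\<bar> \<le> (C1 + C2) * \<bar>K x\<bar> * \<bar>K y\<bar> * \<bar>K z\<bar>"
  proof (intro allI)
    fix x y z
    have "\<bar>h1 x y z + h2 x y z\<bar> \<le> \<bar>h1 x y z\<bar> + \<bar>h2 x y z\<bar>" by (rule abs_triangle_ineq)
    also have "\<dots> \<le> C1 * \<bar>K x\<bar> * \<bar>K y\<bar> * \<bar>K z\<bar> + C2 * \<bar>K x\<bar> * \<bar>K y\<bar> * \<bar>K z\<bar>"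
      using b1 b2 by (meson add_mono)
    finally show "\<bar>h1 x y z + h2 x y z\<bar> \<le> (C1 + C2) * \<bar>K x\<bar> * \<bar>K y\<bar> * \<bar>K z\<bar>"
      by (simp add: algebra_simps)
  qed
  ultimately show ?thesis unfolding dom3_def by (auto simp: case_prod_beta')
qed

lemma dom3_intro:
  assumes m: "(\<lambda>(x,y,z). c x y z) \<in> borel_measurable (lborel \<Otimes>\<^sub>M (lborel \<Otimes>\<^sub>M lborel))"
    and b: "\<And>x y z. \<bar>c x y z\<bar> \<le> C"
  shows "dom3 (\<lambda>x y z. c x y z * K x * K y * K z)"
proof -
  have "(\<lambda>p. (\<lambda>(x,y,z). c x y z) p * (\<lambda>(x,y,z). K x * K y * K z) p) \<in> borel_measurable (lborel \<Otimes>\<^sub>M (lborel \<Otimes>\<^sub>M lborel))"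
    using m by measurable
  moreover have "\<bar>c x y z * K x * K y * K z\<bar> \<le> C * \<bar>K x\<bar> * \<bar>K y\<bar> * \<bar>K z\<bar>" for x y z
  proof -
    have "\<bar>c x y z * K x * K y * K z\<bar> = \<bar>c x y z\<bar> * (\<bar>K x\<bar> * \<bar>K y\<bar> * \<bar>K z\<bar>)"
      by (simp add: abs_mult)
    also have "\<dots> \<le> C * (\<bar>K x\<bar> * \<bar>K y\<bar> * \<bar>K z\<bar>)"
      by (rule mult_right_mono[OF b]) simp
    finally show ?thesis by (simp add: mult.assoc)
  qed
  ultimately show ?thesis unfolding dom3_def by (auto simp: case_prod_beta' mult.assoc)
qed

lemma lborel_neg: fixes f :: "real \<Rightarrow> real" shows "(LBINT x. f x) = (LBINT x. f (- x))"
  using lborel_integral_real_affine[of "-1" f 0] by simp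

lemma I3_neg: fixes h :: "real \<Rightarrow> real \<Rightarrow> real \<Rightarrow> real" shows "(LBINT z. LBINT y. LBINT x. h x y z) = (LBINT z. LBINT y. LBINT x. h (-x) (-y) (-z))"
  by (subst lborel_neg, rule Bochner_Integration.integral_cong[OF refl],
      subst lborel_neg, rule Bochner_Integration.integral_cong[OF refl],
      subst lborel_neg, rule refl)

lemma I3_odd: fixes h :: "real \<Rightarrow> real \<Rightarrow> real \<Rightarrow> real" assumes "\<And>x y z. h (-x) (-y) (-z) = - h x y z"
  shows "(LBINT z. LBINT y. LBINT x. h x y z) = 0"
  using I3_neg[of h] assms by (simp del: integral_minus) (simp add: integral_minus)

end

locale skern = kern +
  assumes K_sym: "\<And>s. K (- s) = K s"
    and K_supp: "\<And>s. \<bar>s\<bar> > 1 \<Longrightarrow> K s = 0"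
    and K_one: "(LBINT s. K s) = 1"
begin

lemma xK_le: "\<bar>x * K x\<bar> \<le> \<bar>K x\<bar>"
proof (cases "\<bar>x\<bar> > 1")
  case True thus ?thesis using K_supp by simp
next
  case False thus ?thesis by (simp add: abs_mult mult_left_le_one_le)
qed

lemma part1:
  "(LBINT (s3::real). LBINT (s2::real). LBINT (s1::real).
        of_bool (s1 < s2 \<and> s2 < s3) * sgn (s3 - 2 *  s2 + s1) * K s1 * K s2 * K s3) = 0"
proof -
  define h where "h = (\<lambda>s1 s2 s3. of_bool (s1 < s2 \<and> s2 < s3) * sgn (s3 - 2 *  s2 + s1) * K s1 * K s2 * K s3)"
  have d: "dom3 h" unfolding h_def
    by (rule dom3_intro[where C=1]) (auto simp: sgn_real_def)
  have "(LBINT z. LBINT y. LBINT x. h x y z) = (LBINT z. LBINT y. LBINT x. h (-x) (-y) (-z))"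
    by (rule I3_neg)
  also have "\<dots> = (LBINT z. LBINT y. LBINT x. - h z y x)"
  proof -
    have pw: "h (-x) (-y) (-z) = - h z y x" for x y z
    proof -
      have "sgn (- z - 2 * (- y) + - x) = - sgn (x - 2 * y + z)" by (simp add: sgn_real_def)
      thus ?thesis unfolding h_def by (simp add: K_sym conj_commute)
    qed
    show ?thesis by (simp only: pw)
  qed
  also have "\<dots> = - (LBINT z. LBINT y. LBINT x. h z y x)" by simp
  also have "\<dots> = - (LBINT z. LBINT y. LBINT x. h x y z)" using I3_swap13[OF d] by simp
  finally show ?thesis unfolding h_def by simp
qed

lemma part3:
  assumes k: "k \<in> {1::nat,2,3}" and l: "l \<in> {1::nat,2,3}"
  shows "(LBINT (s3::real). LBINT (s2::real). LBINT (s1::real).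
        (of_bool (s1 < s2 \<and> s2 < s3) + of_bool (s3 < s2 \<and> s2 < s1)) * sgn (s3 - 2 *  s2 + s1)
        * ([s1,s2,s3] ! (k - 1)) * ([s1,s2,s3] ! (l - 1)) * K s1 * K s2 * K s3) = 0"
proof (rule I3_odd)
  fix x y z :: real
  have nk: "[-x,-y,-z] ! (k - 1) = - ([x,y,z] ! (k - 1))" using k by auto
  have nl: "[-x,-y,-z] ! (l - 1) = - ([x,y,z] ! (l - 1))" using l by auto
  have sg: "sgn (- z - 2 * (- y) + - x) = - sgn (z - 2 * y + x)" by (simp add: sgn_real_def)
  show "(of_bool (- x < - y \<and> - y < - z) + of_bool (- z < - y \<and> - y < - x)) * sgn (- z - 2 * - y + - x) *
          [- x, - y, - z] ! (k - 1) * [- x, - y, - z] ! (l - 1) * K (- x) * K (- y) * K (- z) =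
        - ((of_bool (x < y \<and> y < z) + of_bool (z < y \<and> y < x)) * sgn (z - 2 * y + x) *
          [x, y, z] ! (k - 1) * [x, y, z] ! (l - 1) * K x * K y * K z)"
    unfolding nk nl sg K_sym by (simp add: conj_commute add.commute)
qed

definition "F a = (LBINT t. of_bool (t < a) * K t)"

lemma dom1_ind: assumes "P \<in> measurable borel (count_space UNIV)"
  shows "dom1 (\<lambda>t. of_bool (P t) * K t)"
  unfolding dom1_def
proof
  show "(\<lambda>t. of_bool (P t) * K t) \<in> borel_measurable borel" using assms by measurable
  show "\<exists>C. \<forall>x. \<bar>of_bool (P x) * K x\<bar> \<le> C * \<bar>K x\<bar>" by (rule exI[of _ 1]) auto
qed

lemma int_ind: assumes "P \<in> measurable borel (count_space UNIV)"
  shows "integrable lborel (\<lambda>t. of_bool (P t) * K t)"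
  by (rule dom1_int[OF dom1_ind[OF assms]])

lemma F_le: "(LBINT t. of_bool (t \<le> a) * K t) = F a"
  unfolding F_def
  by (rule integral_cong_AE) (use AE_lborel_singleton[of a] in \<open>auto elim!: eventually_mono\<close>)

lemma F_gt: "(LBINT t. of_bool (a < t) * K t) = 1 - F a"
proof -
  have "(LBINT t. of_bool (a < t) * K t) = (LBINT t. K t - of_bool (t \<le> a) * K t)"
    by (rule Bochner_Integration.integral_cong) auto
  also have "\<dots> = (LBINT t. K t) - (LBINT t. of_bool (t \<le> a) * K t)"
    by (rule Bochner_Integration.integral_diff) (use K_int int_ind in auto)
  finally show ?thesis using K_one F_le by simp
qed

lemma F_between: assumes "b < a" shows "(LBINT t. of_bool (b < t \<and> t < a) * K t) = F a - F b"
proof -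
  have "(LBINT t. of_bool (b < t \<and> t < a) * K t) = (LBINT t. of_bool (t < a) * K t - of_bool (t \<le> b) * K t)"
    by (rule Bochner_Integration.integral_cong) (use assms in auto)
  also have "\<dots> = (LBINT t. of_bool (t < a) * K t) - (LBINT t. of_bool (t \<le> b) * K t)"
    by (rule Bochner_Integration.integral_diff) (use K_int int_ind in auto)
  finally show ?thesis using F_le unfolding F_def by simp
qed

lemma L_up: assumes "b < a" shows "(LBINT z. of_bool (b < z) * sgn (z - a) * K z) = 1 + F b - 2 * F a"
proof -
  have "(LBINT z. of_bool (b < z) * sgn (z - a) * K z) = (LBINT t. of_bool (a < t) * K t - of_bool (b < t \<and> t < a) * K t)"
    by (rule Bochner_Integration.integral_cong) (use assms in \<open>auto simp: sgn_real_def\<close>)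
  also have "\<dots> = (LBINT t. of_bool (a < t) * K t) - (LBINT t. of_bool (b < t \<and> t < a) * K t)"
    by (rule Bochner_Integration.integral_diff) (use K_int int_ind in auto)
  finally show ?thesis using F_gt F_between[of b a] assms by simp
qed

lemma L_down: assumes "a < b" shows "(LBINT z. of_bool (z < b) * sgn (z - a) * K z) = F b - 2 * F a"
proof -
  have "(LBINT z. of_bool (z < b) * sgn (z - a) * K z) = (LBINT t. of_bool (a < t \<and> t < b) * K t - of_bool (t < a) * K t)"
    by (rule Bochner_Integration.integral_cong) (use assms in \<open>auto simp: sgn_real_def\<close>)
  also have "\<dots> = (LBINT t. of_bool (a < t \<and> t < b) * K t) - (LBINT t. of_bool (t < a) * K t)"
    by (rule Bochner_Integration.integral_diff) (use K_int int_ind in auto)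
  finally show ?thesis using F_between[of a b] assms unfolding F_def by simp
qed

lemma F_meas[measurable]: "F \<in> borel_measurable borel"
proof -
  have "(\<lambda>a. LBINT t. of_bool (t < a) * K t) \<in> borel_measurable lborel"
    by (rule lborel.borel_measurable_lebesgue_integral) measurable
  thus ?thesis unfolding F_def[abs_def] by simp
qed

lemma F_bound: "\<bar>F a\<bar> \<le> (LBINT t. \<bar>K t\<bar>)"
proof -
  have "\<bar>F a\<bar> \<le> (LBINT t. \<bar>of_bool (t < a) * K t\<bar>)"
    unfolding F_def using integral_norm_bound[of lborel "\<lambda>t. of_bool (t < a) * K t"] by simp
  also have "\<dots> \<le> (LBINT t. \<bar>K t\<bar>)"
    by (rule integral_mono) (use K_int int_ind in auto)
  finally show ?thesis .
qed

lemma KK_F: fixes KK :: "real \<Rightarrow> real" assumes "\<And>x y. x \<le> y \<Longrightarrow> KK y - KK x = (LBINT t=x..y. K t)"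
  shows "KK x = F x + (KK 0 - F 0)"
proof -
  have d: "KK y - KK x = F y - F x" if "x \<le> y" for x y
  proof (cases "x = y")
    case True thus ?thesis by simp
  next
    case False hence xy: "x < y" using that by simp
    have "KK y - KK x = (LBINT t. indicator {x<..<y} t * K t)"
      using assms[OF that] that by (simp add: interval_lebesgue_integral_le_eq set_lebesgue_integral_def)
    also have "\<dots> = (LBINT t. of_bool (x < t \<and> t < y) * K t)"
      by (rule Bochner_Integration.integral_cong) (auto simp: indicator_def)
    finally show ?thesis using F_between[OF xy] by simp
  qed
  show ?thesis using d[of 0 x] d[of x 0] by (cases "0 \<le> x") auto
qed

lemma dom3_intro_x:
  assumes m: "(\<lambda>(x,y,z). c x y z) \<in> borel_measurable (lborel \<Otimes>\<^sub>M (lborel \<Otimes>\<^sub>M lborel))"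
    and b: "\<And>x y z. \<bar>c x y z\<bar> \<le> C"
  shows "dom3 (\<lambda>x y z. c x y z * x * K x * K y * K z)"
proof -
  have "(\<lambda>p. (\<lambda>(x,y,z). c x y z) p * (\<lambda>(x,y,z). x * K x * K y * K z) p) \<in> borel_measurable (lborel \<Otimes>\<^sub>M (lborel \<Otimes>\<^sub>M lborel))"
    using m by measurable
  moreover have "\<bar>c x y z * x * K x * K y * K z\<bar> \<le> C * \<bar>K x\<bar> * \<bar>K y\<bar> * \<bar>K z\<bar>" for x y z
  proof -
    have C0: "0 \<le> C" using b[of x y z] by simp
    have "\<bar>c x y z * x * K x * K y * K z\<bar> = \<bar>c x y z\<bar> * \<bar>x * K x\<bar> * (\<bar>K y\<bar> * \<bar>K z\<bar>)"
      by (simp add: abs_mult)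
    also have "\<dots> \<le> C * \<bar>K x\<bar> * (\<bar>K y\<bar> * \<bar>K z\<bar>)"
      by (intro mult_right_mono mult_mono b xK_le C0) auto
    finally show ?thesis by (simp add: mult.assoc)
  qed
  ultimately show ?thesis unfolding dom3_def by (auto simp: case_prod_beta' mult.assoc)
qed

lemma dom2_intro_x:
  assumes m: "(\<lambda>(x,y). c x y) \<in> borel_measurable (lborel \<Otimes>\<^sub>M lborel)"
    and b: "\<And>x y. \<bar>c x y\<bar> \<le> C"
  shows "dom2 (\<lambda>x y. x * K x * K y * c x y)"
proof -
  have "(\<lambda>p. (\<lambda>(x,y). x * K x * K y) p * (\<lambda>(x,y). c x y) p) \<in> borel_measurable (lborel \<Otimes>\<^sub>M lborel)"
    using m by measurable
  moreover have "\<bar>x * K x * K y * c x y\<bar> \<le> C * \<bar>K x\<bar> * \<bar>K y\<bar>" for x y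
  proof -
    have C0: "0 \<le> C" using b[of x y] by simp
    have "\<bar>x * K x * K y * c x y\<bar> = \<bar>c x y\<bar> * \<bar>x * K x\<bar> * \<bar>K y\<bar>"
      by (simp add: abs_mult)
    also have "\<dots> \<le> C * \<bar>K x\<bar> * \<bar>K y\<bar>"
      by (intro mult_right_mono mult_mono b xK_le C0) auto
    finally show ?thesis .
  qed
  ultimately show ?thesis unfolding dom2_def by (auto simp: case_prod_beta')
qed

lemma xK_zero: "(LBINT x. x * K x) = 0"
proof -
  have "(LBINT x. x * K x) = (LBINT x. (- x) * K (- x))" by (rule lborel_neg)
  also have "\<dots> = - (LBINT x. x * K x)" by (simp add: K_sym)
  finally show ?thesis by simp
qed

lemma FK_int: "integrable lborel (\<lambda>y. F y * K y)"
proof (rule dom1_int, unfold dom1_def, intro conjI)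
  show "(\<lambda>y. F y * K y) \<in> borel_measurable borel" by measurable
  show "\<exists>C. \<forall>x. \<bar>F x * K x\<bar> \<le> C * \<bar>K x\<bar>"
    by (rule exI[of _ "LBINT t. \<bar>K t\<bar>"]) (auto simp: abs_mult intro: mult_right_mono F_bound)
qed

lemma Q_inner: "(LBINT y. K y * (of_bool (y < x) + 2 * of_bool (x < y) + F x + 2 * F y + e))
   = 2 + 2 * (LBINT y. F y * K y) + e"
proof -
  have "(LBINT y. K y * (of_bool (y < x) + 2 * of_bool (x < y) + F x + 2 * F y + e))
     = (LBINT y. of_bool (y < x) * K y + 2 * (of_bool (x < y) * K y) + F x * K y + 2 * (F y * K y) + e * K y)"
    by (rule Bochner_Integration.integral_cong) (auto simp: algebra_simps)
  also have "\<dots> = (LBINT y. of_bool (y < x) * K y) + 2 * (LBINT y. of_bool (x < y) * K y) + F x * (LBINT y. K y)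
      + 2 * (LBINT y. F y * K y) + e * (LBINT y. K y)"
    using K_int FK_int int_ind[of "\<lambda>y. y < x"] int_ind[of "\<lambda>y. x < y"]
    by (simp add: Bochner_Integration.integral_add)
  also have "\<dots> = 2 + 2 * (LBINT y. F y * K y) + e"
    using F_gt[of x] K_one unfolding F_def by simp
  finally show ?thesis .
qed

lemma Q_zero: "(LBINT y. LBINT x. x * K x * K y * (of_bool (y < x) + 2 * of_bool (x < y) + F x + 2 * F y + e)) = 0"
proof -
  let ?L = "LBINT t. \<bar>K t\<bar>"
  have d: "dom2 (\<lambda>x y. x * K x * K y * (of_bool (y < x) + 2 * of_bool (x < y) + F x + 2 * F y + e))"
  proof (rule dom2_intro_x[where C="3 + 3 * ?L + \<bar>e\<bar>"])
    show "(\<lambda>(x,y). of_bool (y < x) + 2 * of_bool (x < y) + F x + 2 * F y + e) \<in> borel_measurable (lborel \<Otimes>\<^sub>M lborel)"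
      by measurable
    fix x y
    have "\<bar>of_bool (y < x) + 2 * of_bool (x < y) + F x + 2 * F y + e\<bar> \<le> 1 + 2 + \<bar>F x\<bar> + 2 * \<bar>F y\<bar> + \<bar>e\<bar>"
      by (auto simp: abs_if split: if_splits)
    also have "\<dots> \<le> 3 + 3 * ?L + \<bar>e\<bar>" using F_bound[of x] F_bound[of y] by simp
    finally show "\<bar>of_bool (y < x) + 2 * of_bool (x < y) + F x + 2 * F y + e\<bar> \<le> 3 + 3 * ?L + \<bar>e\<bar>" .
  qed
  have "(LBINT y. LBINT x. x * K x * K y * (of_bool (y < x) + 2 * of_bool (x < y) + F x + 2 * F y + e))
    = (LBINT x. LBINT y. x * K x * K y * (of_bool (y < x) + 2 * of_bool (x < y) + F x + 2 * F y + e))"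
    by (rule dom2_swap[OF d])
  also have "\<dots> = (LBINT x. (x * K x) * (LBINT y. K y * (of_bool (y < x) + 2 * of_bool (x < y) + F x + 2 * F y + e)))"
    by (simp add: mult.assoc)
  also have "\<dots> = (LBINT x. x * K x) * (2 + 2 * (LBINT y. F y * K y) + e)"
    by (simp add: Q_inner)
  finally show ?thesis using xK_zero by simp
qed

definition "GA x y = (if y < x then 1 + F x - 2 * F (2 * x - y) else if x < y then F x - 2 * F (2 * x - y) else 0)"
definition "GB x y = (if x < y then 1 + F y - 2 * F (2 * y - x) else if y < x then F y - 2 * F (2 * y - x) else 0)"

lemma innerA: "(LBINT z. (of_bool (y < x \<and> x < z) + of_bool (z < x \<and> x < y)) * sgn (z - 2 * x + y) * K z) = GA x y"
proof -
  consider "y < x" | "x < y" | "x = y" by linarith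
  thus ?thesis
  proof cases
    case 1
    have "(LBINT z. (of_bool (y < x \<and> x < z) + of_bool (z < x \<and> x < y)) * sgn (z - 2 * x + y) * K z)
       = (LBINT z. of_bool (x < z) * sgn (z - (2 * x - y)) * K z)"
      by (rule Bochner_Integration.integral_cong) (use 1 in \<open>auto simp: algebra_simps\<close>)
    also have "\<dots> = 1 + F x - 2 * F (2 * x - y)" by (rule L_up) (use 1 in simp)
    finally show ?thesis using 1 unfolding GA_def by simp
  next
    case 2
    have "(LBINT z. (of_bool (y < x \<and> x < z) + of_bool (z < x \<and> x < y)) * sgn (z - 2 * x + y) * K z)
       = (LBINT z. of_bool (z < x) * sgn (z - (2 * x - y)) * K z)"
      by (rule Bochner_Integration.integral_cong) (use 2 in \<open>auto simp: algebra_simps\<close>)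
    also have "\<dots> = F x - 2 * F (2 * x - y)" by (rule L_down) (use 2 in simp)
    finally show ?thesis using 2 unfolding GA_def by simp
  next
    case 3 thus ?thesis unfolding GA_def by simp
  qed
qed

lemma innerB: "(LBINT z. (of_bool (x < y \<and> y < z) + of_bool (z < y \<and> y < x)) * sgn (z - 2 * y + x) * K z) = GB x y"
proof -
  consider "x < y" | "y < x" | "x = y" by linarith
  thus ?thesis
  proof cases
    case 1
    have "(LBINT z. (of_bool (x < y \<and> y < z) + of_bool (z < y \<and> y < x)) * sgn (z - 2 * y + x) * K z)
       = (LBINT z. of_bool (y < z) * sgn (z - (2 * y - x)) * K z)"
      by (rule Bochner_Integration.integral_cong) (use 1 in \<open>auto simp: algebra_simps\<close>)
    also have "\<dots> = 1 + F y - 2 * F (2 * y - x)" by (rule L_up) (use 1 in simp)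
    finally show ?thesis using 1 unfolding GB_def by simp
  next
    case 2
    have "(LBINT z. (of_bool (x < y \<and> y < z) + of_bool (z < y \<and> y < x)) * sgn (z - 2 * y + x) * K z)
       = (LBINT z. of_bool (z < y) * sgn (z - (2 * y - x)) * K z)"
      by (rule Bochner_Integration.integral_cong) (use 2 in \<open>auto simp: algebra_simps\<close>)
    also have "\<dots> = F y - 2 * F (2 * y - x)" by (rule L_down) (use 2 in simp)
    finally show ?thesis using 2 unfolding GB_def by simp
  next
    case 3 thus ?thesis unfolding GB_def by simp
  qed
qed

lemma GA_meas[measurable]: "(\<lambda>(x,y). GA x y) \<in> borel_measurable (lborel \<Otimes>\<^sub>M lborel)"
  unfolding GA_def by measurable
lemma GB_meas[measurable]: "(\<lambda>(x,y). GB x y) \<in> borel_measurable (lborel \<Otimes>\<^sub>M lborel)"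
  unfolding GB_def by measurable

lemma GA_bound: "\<bar>GA x y\<bar> \<le> 1 + 3 * (LBINT t. \<bar>K t\<bar>)"
  using F_bound[of x] F_bound[of "2*x-y"] unfolding GA_def abs_le_iff by auto
lemma GB_bound: "\<bar>GB x y\<bar> \<le> 1 + 3 * (LBINT t. \<bar>K t\<bar>)"
  using F_bound[of y] F_bound[of "2*y-x"] unfolding GB_def abs_le_iff by auto

lemma part2:
  fixes KK :: "real \<Rightarrow> real"
  assumes KK_anti: "\<And>x y. x \<le> y \<Longrightarrow> KK y - KK x = (LBINT t=x..y. K t)"
  shows "(LBINT (s3::real). LBINT (s2::real). LBINT (s1::real).
        ((of_bool (s1 < s2 \<and> s2 < s3) + of_bool (s3 < s2 \<and> s2 < s1)) * sgn (s3 - 2 *  s2 + s1)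
       + (of_bool (s1 < s3 \<and> s3 < s2) + of_bool (s2 < s3 \<and> s3 < s1)) * sgn (s2 - 2 *  s3 + s1)
       + (of_bool (s2 < s1 \<and> s1 < s3) + of_bool (s3 < s1 \<and> s1 < s2)) * sgn (s3 - 2 *  s1 + s2))
       * s1 * K s1 * K s2 * K s3)
    = - 2 * (LBINT (s2::real). LBINT (s1::real). K s1 * K s2 * (KK (2 *  s1 - s2) + 2 * KK (2 *  s2 - s1)) * s1)"
proof -
  define c where "c = KK 0 - F 0"
  have KKc: "KK x = F x + c" for x using KK_F[OF KK_anti] unfolding c_def by blast
  define cA where "cA = (\<lambda>x y z::real. (of_bool (y < x \<and> x < z) + of_bool (z < x \<and> x < y)) * sgn (z - 2 * x + y))"
  define cB where "cB = (\<lambda>x y z::real. (of_bool (x < y \<and> y < z) + of_bool (z < y \<and> y < x)) * sgn (z - 2 * y + x))"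
  define cC where "cC = (\<lambda>x y z::real. (of_bool (x < z \<and> z < y) + of_bool (y < z \<and> z < x)) * sgn (y - 2 * z + x))"
  define hA where "hA = (\<lambda>x y z. cA x y z * x * K x * K y * K z)"
  define hB where "hB = (\<lambda>x y z. cB x y z * x * K x * K y * K z)"
  define hC where "hC = (\<lambda>x y z. cC x y z * x * K x * K y * K z)"
  have dA: "dom3 hA" unfolding hA_def
    by (rule dom3_intro_x[where C=2]) (auto simp: cA_def sgn_real_def)
  have dB: "dom3 hB" unfolding hB_def
    by (rule dom3_intro_x[where C=2]) (auto simp: cB_def sgn_real_def)
  have dC: "dom3 hC" unfolding hC_def
    by (rule dom3_intro_x[where C=2]) (auto simp: cC_def sgn_real_def)
  let ?L = "LBINT t. \<bar>K t\<bar>"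
  have gA: "dom2 (\<lambda>x y. x * K x * K y * GA x y)"
    by (rule dom2_intro_x[where C="1 + 3 * ?L"]) (auto intro: GA_bound)
  have gB: "dom2 (\<lambda>x y. x * K x * K y * (2 * GB x y))"
  proof (rule dom2_intro_x[where C="2 * (1 + 3 * ?L)"])
    show "(\<lambda>(x, y). 2 * GB x y) \<in> borel_measurable (lborel \<Otimes>\<^sub>M lborel)" by measurable
    show "\<bar>2 * GB x y\<bar> \<le> 2 * (1 + 3 * ?L)" for x y using GB_bound[of x y] by simp
  qed
  define E where "E = (\<lambda>x y. of_bool (y < x) + 2 * of_bool (x < y) + F x + 2 * F y + 6 * c)"
  define P where "P = (\<lambda>x y. -2 * ((F (2 * x - y) + c) + 2 * (F (2 * y - x) + c)))"
  have gE: "dom2 (\<lambda>x y. x * K x * K y * E x y)"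
  proof (rule dom2_intro_x[where C="3 + 3 * ?L + 6 * \<bar>c\<bar>"])
    show "(\<lambda>(x, y). E x y) \<in> borel_measurable (lborel \<Otimes>\<^sub>M lborel)" unfolding E_def by measurable
    fix x y
    show "\<bar>E x y\<bar> \<le> 3 + 3 * ?L + 6 * \<bar>c\<bar>"
      using F_bound[of x] F_bound[of y] unfolding E_def abs_le_iff by auto
  qed
  have gP: "dom2 (\<lambda>x y. x * K x * K y * P x y)"
  proof (rule dom2_intro_x[where C="6 * ?L + 6 * \<bar>c\<bar>"])
    show "(\<lambda>(x, y). P x y) \<in> borel_measurable (lborel \<Otimes>\<^sub>M lborel)" unfolding P_def by measurable
    fix x y
    show "\<bar>P x y\<bar> \<le> 6 * ?L + 6 * \<bar>c\<bar>"
      using F_bound[of "2*x-y"] F_bound[of "2*y-x"] unfolding P_def abs_le_iff by auto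
  qed
  have pwsum: "(cB x y z + cC x y z + cA x y z) * x * K x * K y * K z = hB x y z + hC x y z + hA x y z" for x y z
    unfolding hA_def hB_def hC_def by (simp add: algebra_simps)
  have "(LBINT z. LBINT y. LBINT x. (cB x y z + cC x y z + cA x y z) * x * K x * K y * K z)
      = (LBINT z. LBINT y. LBINT x. hB x y z + hC x y z + hA x y z)"
    by (simp only: pwsum)
  also have "\<dots> = (LBINT z. LBINT y. LBINT x. hB x y z) + (LBINT z. LBINT y. LBINT x. hC x y z)
       + (LBINT z. LBINT y. LBINT x. hA x y z)"
    using I3_add[OF dom3_add[OF dB dC] dA] I3_add[OF dB dC] by simp
  also have "(LBINT z. LBINT y. LBINT x. hC x y z) = (LBINT z. LBINT y. LBINT x. hB x y z)"
  proof -
    have "hB x z y = hC x y z" for x y z unfolding hB_def hC_def cB_def cC_def by (simp add: ac_simps)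
    thus ?thesis using I3_swap23[OF dB] by simp
  qed
  also have "(LBINT z. LBINT y. LBINT x. hA x y z) = (LBINT y. LBINT x. x * K x * K y * GA x y)"
  proof -
    have "(LBINT z. hA x y z) = x * K x * K y * GA x y" for x y
    proof -
      have "(LBINT z. hA x y z) = (LBINT z. (x * K x * K y) * (cA x y z * K z))"
        unfolding hA_def by (simp add: ac_simps)
      also have "\<dots> = x * K x * K y * GA x y"
        unfolding cA_def by (simp add: innerA)
      finally show ?thesis .
    qed
    thus ?thesis using I3_rot[OF dA] by simp
  qed
  also have "(LBINT z. LBINT y. LBINT x. hB x y z) = (LBINT y. LBINT x. x * K x * K y * GB x y)"
  proof -
    have "(LBINT z. hB x y z) = x * K x * K y * GB x y" for x y
    proof -
      have "(LBINT z. hB x y z) = (LBINT z. (x * K x * K y) * (cB x y z * K z))"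
        unfolding hB_def by (simp add: ac_simps)
      also have "\<dots> = x * K x * K y * GB x y"
        unfolding cB_def by (simp add: innerB)
      finally show ?thesis .
    qed
    thus ?thesis using I3_rot[OF dB] by simp
  qed
  also have "(LBINT y. LBINT x. x * K x * K y * GB x y) + (LBINT y. LBINT x. x * K x * K y * GB x y)
      + (LBINT y. LBINT x. x * K x * K y * GA x y)
      = (LBINT y. LBINT x. x * K x * K y * GA x y) + (LBINT y. LBINT x. x * K x * K y * (2 * GB x y))"
  proof -
    have pw2: "x * K x * K y * (2 * GB x y) = 2 * (x * K x * K y * GB x y)" for x y by simp
    have t2: "(LBINT y. LBINT x. x * K x * K y * (2 * GB x y)) = 2 * (LBINT y. LBINT x. x * K x * K y * GB x y)"
      by (simp only: pw2 integral_mult_right_zero)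
    show ?thesis unfolding t2 by simp
  qed
  also have "\<dots> = (LBINT y. LBINT x. x * K x * K y * GA x y + x * K x * K y * (2 * GB x y))"
    by (rule I2_add[OF gA gB, symmetric])
  also have "\<dots> = (LBINT y. LBINT x. x * K x * K y * P x y + x * K x * K y * E x y)"
  proof (rule Bochner_Integration.integral_cong[OF refl], rule integral_cong_AE)
    fix y
    show "(\<lambda>x. x * K x * K y * GA x y + x * K x * K y * (2 * GB x y)) \<in> borel_measurable lborel"
      using dom2_fix[OF gA, of y] dom2_fix[OF gB, of y] by measurable
    show "(\<lambda>x. x * K x * K y * P x y + x * K x * K y * E x y) \<in> borel_measurable lborel"
      using dom2_fix[OF gP, of y] dom2_fix[OF gE, of y] by measurable
    show "AE x in lborel. x * K x * K y * GA x y + x * K x * K y * (2 * GB x y) = x * K x * K y * P x y + x * K x * K y * E x y"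
      using AE_lborel_singleton[of y]
    proof (rule eventually_mono)
      fix x assume "x \<noteq> y"
      hence "GA x y + 2 * GB x y = P x y + E x y"
        unfolding GA_def GB_def P_def E_def by (cases "x < y") (auto simp: algebra_simps)
      thus "x * K x * K y * GA x y + x * K x * K y * (2 * GB x y) = x * K x * K y * P x y + x * K x * K y * E x y"
        by (metis distrib_left)
    qed
  qed
  also have "\<dots> = (LBINT y. LBINT x. x * K x * K y * P x y) + (LBINT y. LBINT x. x * K x * K y * E x y)"
    by (rule I2_add[OF gP gE])
  also have "(LBINT y. LBINT x. x * K x * K y * E x y) = 0"
    unfolding E_def by (rule Q_zero)
  also have "(LBINT y. LBINT x. x * K x * K y * P x y)
     = - 2 * (LBINT (s2::real). LBINT (s1::real). K s1 * K s2 * (KK (2 *  s1 - s2) + 2 * KK (2 *  s2 - s1)) * s1)"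
  proof -
    have "x * K x * K y * P x y = - 2 * (K x * K y * (KK (2 *  x - y) + 2 * KK (2 *  y - x)) * x)" for x y
      unfolding P_def KKc by (simp add: algebra_simps)
    thus ?thesis by simp
  qed
  finally have main: "(LBINT z. LBINT y. LBINT x. (cB x y z + cC x y z + cA x y z) * x * K x * K y * K z)
     = - 2 * (LBINT (s2::real). LBINT (s1::real). K s1 * K s2 * (KK (2 *  s1 - s2) + 2 * KK (2 *  s2 - s1)) * s1)"
    by simp
  thus ?thesis unfolding cA_def cB_def cC_def .
qed

end

theorem lemma4:
  fixes K KK :: "real \<Rightarrow> real"
  assumes K_int: "integrable lborel K"
    and K_sym: "\<And>s. K (- s) = K s"
    and K_one: "(LBINT s. K s) = 1"
    and K_supp: "\<And>s. \<bar>s\<bar> > 1 \<Longrightarrow> K s = 0"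
    and KK_anti: "\<And>x y. x \<le> y \<Longrightarrow> KK y - KK x = (LBINT t=x..y. K t)"
  shows
   "(LBINT (s3::real). LBINT (s2::real). LBINT (s1::real).
        of_bool (s1 < s2 \<and> s2 < s3) * sgn (s3 - 2 *  s2 + s1) * K s1 * K s2 * K s3) = 0
    \<and>
    (LBINT (s3::real). LBINT (s2::real). LBINT (s1::real).
        ((of_bool (s1 < s2 \<and> s2 < s3) + of_bool (s3 < s2 \<and> s2 < s1)) * sgn (s3 - 2 *  s2 + s1)
       + (of_bool (s1 < s3 \<and> s3 < s2) + of_bool (s2 < s3 \<and> s3 < s1)) * sgn (s2 - 2 *  s3 + s1)
       + (of_bool (s2 < s1 \<and> s1 < s3) + of_bool (s3 < s1 \<and> s1 < s2)) * sgn (s3 - 2 *  s1 + s2))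
       * s1 * K s1 * K s2 * K s3)
    = - 2 * (LBINT (s2::real). LBINT (s1::real). K s1 * K s2 * (KK (2 *  s1 - s2) + 2 * KK (2 *  s2 - s1)) * s1)
    \<and>
    (\<forall>k\<in>{1::nat,2,3}. \<forall>l\<in>{1::nat,2,3}.
      (LBINT (s3::real). LBINT (s2::real). LBINT (s1::real).
        (of_bool (s1 < s2 \<and> s2 < s3) + of_bool (s3 < s2 \<and> s2 < s1)) * sgn (s3 - 2 *  s2 + s1)
        * ([s1,s2,s3] ! (k - 1)) * ([s1,s2,s3] ! (l - 1)) * K s1 * K s2 * K s3) = 0)"
proof -
  interpret skern K
    by unfold_locales (use K_int K_sym K_supp K_one in auto)
  show ?thesis
    using part1 part2[OF KK_anti] part3 by blast
qed

end
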